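(* For $n\in\mathbb{N}$ and $k\in\mathbb{Z}$ with $k<0$, let $a(n,k)$ be the number of $x\in\mathbb{Z}^n$ with $x_j\le1$ for all $j=1,\dots,n$ and $\sum_{j=1}^nx_j=k$. Then \[ a(n,k)\le a(n)\{|k|+\tfrac32 n\}^{n-1},\qquad a(n)=\frac{\sqrt n}{\alpha(n-1)}\frac{2^{n-1}}{(n-1)!}, \] where $\alpha(m)$ is the volume of the unit ball in $\mathbb{R}^m$ and $\alpha(0)=1$. *)

theory Defs
  imports "HOL-Analysis.Analysis"
begin

definition acount :: "nat \<Rightarrow> int \<Rightarrow> nat" where
  "acount n k = card {xs :: int list. length xs = n \<and> (\<forall>j<n. xs ! j \<le> 1) \<and> sum_list xs = k}"

text \<open>alpha m = volume of the unit ball in R^m (library: content_ball gives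
  content (ball c 1) = unit_ball_vol DIM('a)); alpha 0 = 1.\<close>
definition alpha :: "nat \<Rightarrow> real" where
  "alpha m = unit_ball_vol (real m)"

definition aconst :: "nat \<Rightarrow> real" where
  "aconst n = sqrt (real n) / alpha (n - 1) * 2 ^ (n - 1) / fact (n - 1)"

end

theory Submission
  imports Defs
begin

lemma vol_rec: "m \<ge> 0 \<Longrightarrow> unit_ball_vol (m + 2) = 2 * pi / (m + 2) * unit_ball_vol m"
proof -
  assume m: "m \<ge> 0"
  have nz: "m/2 + 1 \<notin> \<int>\<^sub>\<le>\<^sub>0" using m
    by (metis add_nonneg_pos divide_nonneg_nonneg le_less_trans nonpos_Ints_cases of_int_le_0_iff order_less_irrefl zero_le_numeral zero_less_one)
  have g: "Gamma ((m+2)/2 + 1) = (m/2+1) * Gamma (m/2+1)"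
    using Gamma_plus1[OF nz] by (simp add: field_simps)
  have p: "pi powr ((m+2)/2) = pi * pi powr (m/2)"
    by (simp add: add_divide_distrib powr_add)
  show ?thesis unfolding unit_ball_vol_def g p using m
    by (simp add: field_simps)
qed

lemma vol_le: "unit_ball_vol (real m) \<le> 2 ^ m"
proof (induction m rule: less_induct)
  case (less m)
  show ?case
  proof (cases "m < 2")
    case True
    then have "m = 0 \<or> m = 1" by auto
    then show ?thesis by auto
  next
    case False
    then obtain j where j: "m = j + 2" by (metis add.commute le_Suc_ex not_less)
    have ih: "unit_ball_vol (real j) \<le> 2 ^ j" using less j by auto
    have "unit_ball_vol (real m) = 2 * pi / (real j + 2) * unit_ball_vol (real j)"
      using vol_rec[of "real j"] j by (simp add: add.commute)
    also have "\<dots> \<le> 4 * 2 ^ j"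
    proof (rule mult_mono)
      show "2 * pi / (real j + 2) \<le> 4" using pi_less_4 by (simp add: field_simps)
    qed (use ih in auto)
    finally show ?thesis using j by (simp add: power_add)
  qed
qed


lemma count_eq:
  assumes "k < 0"
  shows "acount n k = card {l::nat list. size l = n \<and> sum_list l = nat (int n - k)}"
proof -
  define g where "g = map (\<lambda>y::nat. 1 - int y)"
  have inj: "inj_on g UNIV" unfolding g_def
    by (intro inj_mapI inj_onI) simp
  have sl: "sum_list (g l) = int (length l) - int (sum_list l)" for l
    unfolding g_def by (induction l) auto
  have "{xs :: int list. length xs = n \<and> (\<forall>j<n. xs ! j \<le> 1) \<and> sum_list xs = k}
      = g ` {l::nat list. size l = n \<and> sum_list l = nat (int n - k)}"
  proof (intro equalityI subsetI)
    fix xs :: "int list" assume "xs \<in> {xs. length xs = n \<and> (\<forall>j<n. xs ! j \<le> 1) \<and> sum_list xs = k}"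
    then have xs: "length xs = n" "\<forall>j<n. xs ! j \<le> 1" "sum_list xs = k" by auto
    define l where "l = map (\<lambda>x. nat (1 - x)) xs"
    have "\<forall>x\<in>set xs. x \<le> 1" using xs by (auto simp: in_set_conv_nth)
    then have gl: "g l = xs" unfolding g_def l_def by (induction xs) auto
    have "size l = n" using xs l_def by simp
    moreover have "sum_list l = nat (int n - k)"
      using sl[of l] gl xs \<open>size l = n\<close> by simp
    ultimately show "xs \<in> g ` {l::nat list. size l = n \<and> sum_list l = nat (int n - k)}"
      using gl by blast
  next
    fix xs assume "xs \<in> g ` {l::nat list. size l = n \<and> sum_list l = nat (int n - k)}"
    then obtain l where l: "size l = n" "sum_list l = nat (int n - k)" "xs = g l" by auto
    show "xs \<in> {xs. length xs = n \<and> (\<forall>j<n. xs ! j \<le> 1) \<and> sum_list xs = k}"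
      using l sl[of l] assms unfolding g_def by auto
  qed
  then show ?thesis unfolding acount_def
    using card_image[OF inj_on_subset[OF inj subset_UNIV]] by simp
qed

lemma choose_prod: "real (fact b) * real ((N + b) choose b) = (\<Prod>i\<in>{1..b}. real (N + i))"
proof (induction b)
  case 0 then show ?case by simp
next
  case (Suc b)
  have e: "Suc b * (Suc (N + b) choose Suc b) = Suc (N + b) * ((N + b) choose b)"
    by (rule Suc_times_binomial)
  have "real (fact (Suc b)) * real ((N + Suc b) choose Suc b)
      = real (fact b) * real (Suc b * (Suc (N + b) choose Suc b))"
  proof -
    have "fact (Suc b) * ((N + Suc b) choose Suc b) = fact b * (Suc b * (Suc (N + b) choose Suc b))"
      by (simp only: fact_Suc add_Suc_right mult_ac of_nat_id)
    then show ?thesis by (metis of_nat_mult)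
  qed
  also have "\<dots> = real (fact b) * real ((N + b) choose b) * real (N + Suc b)"
    by (subst e) (simp add: algebra_simps)
  also have "\<dots> = (\<Prod>i\<in>{1..Suc b}. real (N + i))"
    using Suc by (simp add: prod.cl_ivl_Suc)
  finally show ?case .
qed

lemma prod_bound:
  "(\<Prod>i\<in>{1..b}. real (N + i)) \<le> ((2 * real N + real b + 1) / 2) ^ b"
proof -
  define c where "c = (2 * real N + real b + 1) / 2"
  define P where "P = (\<Prod>i\<in>{1..b}. real (N + i))"
  have rev: "P = (\<Prod>i\<in>{1..b}. real (N + (b + 1 - i)))"
    unfolding P_def by (subst prod.atLeastAtMost_rev) simp
  have "P ^ 2 = (\<Prod>i\<in>{1..b}. real (N + i) * real (N + (b + 1 - i)))"
    by (metis P_def power2_eq_square prod.distrib rev)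
  also have "\<dots> \<le> (\<Prod>i\<in>{1..b}. c ^ 2)"
  proof (rule prod_mono)
    fix i assume i: "i \<in> {1..b}"
    define x where "x = real (N + i)"
    define y where "y = real (N + (b + 1 - i))"
    have "x + y = 2 * c" using i unfolding x_def y_def c_def by (auto simp: of_nat_diff)
    then have cx: "c = (x + y) / 2" by simp
    have "c^2 - x * y = (x - y)^2 / 4"
      unfolding cx by (simp add: power2_eq_square field_simps)
    moreover have "0 \<le> (x - y)^2 / 4" by simp
    ultimately have "x * y \<le> c^2" by linarith
    then show "0 \<le> real (N + i) * real (N + (b + 1 - i)) \<and> real (N + i) * real (N + (b + 1 - i)) \<le> c^2"
      unfolding x_def y_def by simp
  qed
  also have "\<dots> = (c ^ b) ^ 2" by (simp add: power_mult[symmetric] mult.commute)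
  finally have "P ^ 2 \<le> (c ^ b) ^ 2" .
  moreover have "c \<ge> 0" unfolding c_def by simp
  ultimately have "P \<le> c ^ b" by (meson power2_le_imp_le zero_le_power)
  then show ?thesis unfolding P_def c_def .
qed


theorem lemma5p1:
  fixes n :: nat and k :: int
  assumes "n \<ge> 1" and "k < 0"
  shows "real (acount n k) \<le> aconst n * (real_of_int \<bar>k\<bar> + 3 / 2 * real n) ^ (n - 1)"
proof -
  define b where "b = n - 1"
  define N where "N = nat (int n - k)"
  have nb: "n = b + 1" using assms b_def by simp
  have N: "real N = real n - real_of_int k" using assms N_def by simp
  define c where "c = real_of_int \<bar>k\<bar> + 3 / 2 * real n"
  have c: "c = (2 * real N + real b + 1) / 2" using N nb assms unfolding c_def by simp
  have cnt: "acount n k = (N + b) choose b"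
    using count_eq[OF assms(2), of n] card_length_sum_list[of n "nat (int n - k)"]
      binomial_symmetric[of N "N + b"] nb unfolding N_def[symmetric] by simp
  have fpos: "real (fact b) > 0" by simp
  have "real (acount n k) = (\<Prod>i\<in>{1..b}. real (N + i)) / real (fact b)"
    using choose_prod[of b N] cnt fpos by (simp add: field_simps)
  also have "\<dots> \<le> c ^ b / real (fact b)"
    using prod_bound[of N b] fpos unfolding c by (intro divide_right_mono) auto
  also have "\<dots> \<le> aconst n * c ^ b"
  proof -
    have av: "alpha b > 0" "alpha b \<le> 2 ^ b" unfolding alpha_def using vol_le[of b] by auto
    have "sqrt (real n) \<ge> 1" using assms by simp
    then have "1 * 2 ^ b \<le> sqrt (real n) * (2::real) ^ b"
      by (intro mult_right_mono) auto
    then have "alpha b \<le> sqrt (real n) * 2 ^ b" using av by linarith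
    then have one: "1 \<le> sqrt (real n) / alpha b * 2 ^ b" using av by (simp add: field_simps)
    have cpos: "c ^ b \<ge> 0" unfolding c_def by simp
    have "aconst n = (sqrt (real n) / alpha b * 2 ^ b) / real (fact b)"
      unfolding aconst_def b_def by simp
    then have "aconst n * c ^ b = (sqrt (real n) / alpha b * 2 ^ b) * (c ^ b / real (fact b))"
      by simp
    moreover have "c ^ b / real (fact b) \<ge> 0" using cpos by simp
    moreover have "1 * (c ^ b / real (fact b)) \<le> (sqrt (real n) / alpha b * 2 ^ b) * (c ^ b / real (fact b))"
      using one \<open>c ^ b / real (fact b) \<ge> 0\<close> by (intro mult_right_mono) auto
    ultimately show ?thesis by simp
  qed
  finally show ?thesis unfolding c_def b_def .
qed

end
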